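(* (1) Let $(A,\cdot,[-,-])$ be a Poisson algebra and $\mathcal{B}$ a nondegenerate symmetric bilinear form on $A$ that is invariant on $(A,\cdot)$ and a commutative 2-cocycle on $(A,[-,-])$. Define $\circ$ on $A$ by $\mathcal{B}(x\circ y,z)=\mathcal{B}(y,[x,z])$ for all $x,y,z$. Then $(A,\cdot,\circ)$ is a PCA algebra and $x\circ y-y\circ x=[x,y]$ for all $x,y$. (2) Conversely, let $(A,\cdot,\circ)$ be a PCA algebra and $[x,y]=x\circ y-y\circ x$. Then $A\ltimes_{-\mathcal{L}^*_{\cdot},-\mathcal{L}^*_{\circ}}A^*$ is a Poisson algebra, and the bilinear form $\mathcal{B}_d$ on $A\oplus A^*$ is invariant on its commutative associative product and a commutative 2-cocycle on its Lie bracket.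
   Context: Finite-dimensional spaces, characteristic zero. $\mathcal{L}_{\ast}(x)y=x\ast y$. For $\rho:A\to\mathrm{End}(V)$, $\rho^*:A\to\mathrm{End}(V^* )$ is $\langle\rho^*(x)v^*,u\rangle=-\langle v^*,\rho(x)u\rangle$. For a Poisson algebra $(A,\cdot,[-,-])$ and linear maps $\mu,\rho:A\to\mathrm{End}(V)$, $A\ltimes_{\mu,\rho}V$ is $A\oplus V$ with $(x,u)\cdot(y,v)=(x\cdot y,\mu(x)v+\mu(y)u)$ and $[(x,u),(y,v)]=([x,y],\rho(x)v-\rho(y)u)$. $\mathcal{B}_d((x,a^* ),(y,b^* ))=\langle x,b^*\rangle+\langle a^*,y\rangle$. A bilinear form $\mathcal{B}$ is invariant on $(A,\cdot)$ if $\mathcal{B}(x\cdot y,z)=\mathcal{B}(x,y\cdot z)$; a commutative 2-cocycle on a Lie algebra if it is symmetric and $\mathcal{B}([x,y],z)+\mathcal{B}([y,z],x)+\mathcal{B}([z,x],y)=0$. Poisson algebra: $(A,\cdot)$ commutative associative, $(A,[-,-])$ Lie, $[z,x\cdot y]=[z,x]\cdot y+x\cdot[z,y]$. Anti-pre-Lie algebra: $(A,\circ)$ with $x\circ(y\circ z)-y\circ(x\circ z)=[y,x]\circ z$ and $[x,y]\circ z+[y,z]\circ x+[z,x]\circ y=0$, where $[x,y]=x\circ y-y\circ x$. A PCA algebra is $(A,\cdot,\circ)$ with $(A,\cdot)$ commutative associative, $(A,\circ)$ anti-pre-Lie, and for all $x,y,z$: $(x\cdot y)\circ z=x\cdot(y\circ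 z)+y\cdot(x\circ z)$; $(x\circ y-y\circ x)\cdot z=y\cdot(x\circ z)-x\circ(y\cdot z)$; $z\circ(x\cdot y)+z\cdot(x\circ y)+z\cdot(y\circ x)-2(x\cdot y)\circ z=0$. *)

theory Defs
  imports Main "HOL-Library.Function_Algebras" "HOL-Library.Product_Plus"
begin

definition bilin_op :: "('k::field \<Rightarrow> 'v::ab_group_add \<Rightarrow> 'v) \<Rightarrow> ('v \<Rightarrow> 'v \<Rightarrow> 'v) \<Rightarrow> bool" where
  "bilin_op sc m \<longleftrightarrow>
     (\<forall>x y z. m (x + y) z = m x z + m y z) \<and>
     (\<forall>x y z. m x (y + z) = m x y + m x z) \<and>
     (\<forall>c x y. m (sc c x) y = sc c (m x y)) \<and>
     (\<forall>c x y. m x (sc c y) = sc c (m x y))"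

definition bilin_form :: "('k::field \<Rightarrow> 'v::ab_group_add \<Rightarrow> 'v) \<Rightarrow> ('v \<Rightarrow> 'v \<Rightarrow> 'k) \<Rightarrow> bool" where
  "bilin_form sc B \<longleftrightarrow>
     (\<forall>x y z. B (x + y) z = B x z + B y z) \<and>
     (\<forall>x y z. B x (y + z) = B x y + B x z) \<and>
     (\<forall>c x y. B (sc c x) y = c * B x y) \<and>
     (\<forall>c x y. B x (sc c y) = c * B x y)"

definition comm_assoc_alg where
  "comm_assoc_alg sc m \<longleftrightarrow> bilin_op sc m \<and>
     (\<forall>x y. m x y = m y x) \<and> (\<forall>x y z. m (m x y) z = m x (m y z))"

definition lie_alg where
  "lie_alg sc b \<longleftrightarrow> bilin_op sc b \<and> (\<forall>x. b x x = 0) \<and>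
     (\<forall>x y z. b x (b y z) + b y (b z x) + b z (b x y) = 0)"

definition poisson_alg where
  "poisson_alg sc m b \<longleftrightarrow> comm_assoc_alg sc m \<and> lie_alg sc b \<and>
     (\<forall>x y z. b z (m x y) = m (b z x) y + m x (b z y))"

definition anti_pre_lie_alg where
  "anti_pre_lie_alg sc c \<longleftrightarrow> bilin_op sc c \<and>
     (\<forall>x y z. c x (c y z) - c y (c x z) = c (c y x - c x y) z) \<and>
     (\<forall>x y z. c (c x y - c y x) z + c (c y z - c z y) x + c (c z x - c x z) y = 0)"

definition PCA_alg where
  "PCA_alg sc m c \<longleftrightarrow> comm_assoc_alg sc m \<and> anti_pre_lie_alg sc c \<and>
     (\<forall>x y z. c (m x y) z = m x (c y z) + m y (c x z)) \<and>
     (\<forall>x y z. m (c x y - c y x) z = m y (c x z) - c x (m y z)) \<and>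
     (\<forall>x y z. c z (m x y) + m z (c x y) + m z (c y x) - c (m x y) z - c (m x y) z = 0)"

definition symmetric_form where
  "symmetric_form B \<longleftrightarrow> (\<forall>x y. B x y = B y x)"

definition nondegenerate_form where
  "nondegenerate_form B \<longleftrightarrow> (\<forall>x. (\<forall>y. B x y = 0) \<longrightarrow> x = 0)"

definition invariant_form where
  "invariant_form m B \<longleftrightarrow> (\<forall>x y z. B (m x y) z = B x (m y z))"

definition comm_2cocycle where
  "comm_2cocycle b B \<longleftrightarrow> symmetric_form B \<and>
     (\<forall>x y z. B (b x y) z + B (b y z) x + B (b z x) y = 0)"

(* Concrete finite-dimensional model: A = k^n, realized as functions 'n \<Rightarrow> 'k, 'n finite *)

definition vsc :: "'k::field \<Rightarrow> ('n \<Rightarrow> 'k) \<Rightarrow> ('n \<Rightarrow> 'k)" where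
  "vsc c x = (\<lambda>i. c * x i)"

definition psc :: "'k::field \<Rightarrow> ('n \<Rightarrow> 'k) \<times> ('n \<Rightarrow> 'k) \<Rightarrow> ('n \<Rightarrow> 'k) \<times> ('n \<Rightarrow> 'k)" where
  "psc c p = (vsc c (fst p), vsc c (snd p))"

(* natural pairing between A-dual = k^n and A = k^n (dual basis identification) *)
definition dpair :: "('n::finite \<Rightarrow> 'k::field) \<Rightarrow> ('n \<Rightarrow> 'k) \<Rightarrow> 'k" where
  "dpair a u = (\<Sum>i\<in>UNIV. a i * u i)"

definition dual_rep :: "(('n::finite \<Rightarrow> 'k::field) \<Rightarrow> ('n \<Rightarrow> 'k) \<Rightarrow> ('n \<Rightarrow> 'k)) \<Rightarrow>
     ('n \<Rightarrow> 'k) \<Rightarrow> ('n \<Rightarrow> 'k) \<Rightarrow> ('n \<Rightarrow> 'k)" where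
  "dual_rep \<rho> x a = (THE b. \<forall>u. dpair b u = - dpair a (\<rho> x u))"

definition sd_mult :: "('a \<Rightarrow> 'a \<Rightarrow> 'a) \<Rightarrow> ('a \<Rightarrow> 'v \<Rightarrow> 'v::plus) \<Rightarrow> 'a \<times> 'v \<Rightarrow> 'a \<times> 'v \<Rightarrow> 'a \<times> 'v" where
  "sd_mult m \<mu> p q = (m (fst p) (fst q), \<mu> (fst p) (snd q) + \<mu> (fst q) (snd p))"

definition sd_bracket :: "('a \<Rightarrow> 'a \<Rightarrow> 'a) \<Rightarrow> ('a \<Rightarrow> 'v \<Rightarrow> 'v::minus) \<Rightarrow> 'a \<times> 'v \<Rightarrow> 'a \<times> 'v \<Rightarrow> 'a \<times> 'v" where
  "sd_bracket b \<rho> p q = (b (fst p) (fst q), \<rho> (fst p) (snd q) - \<rho> (fst q) (snd p))"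

definition B_d :: "('n::finite \<Rightarrow> 'k::field) \<times> ('n \<Rightarrow> 'k) \<Rightarrow> ('n \<Rightarrow> 'k) \<times> ('n \<Rightarrow> 'k) \<Rightarrow> 'k" where
  "B_d p q = dpair (snd q) (fst p) + dpair (snd p) (fst q)"

end

theory Submission
  imports Defs
begin


lemma bilin_op_rules:
  assumes "bilin_op sc m"
  shows "m (x + y) z = m x z + m y z" "m x (y + z) = m x y + m x z"
    "m 0 z = 0" "m x 0 = 0" "m (- x) z = - m x z" "m x (- z) = - m x z"
    "m (x - y) z = m x z - m y z" "m x (y - z) = m x y - m x z"
    "m (sc c x) z = sc c (m x z)" "m x (sc c z) = sc c (m x z)"
proof -
  have a1: "\<And>x y z. m (x + y) z = m x z + m y z" and a2: "\<And>x y z. m x (y + z) = m x y + m x z"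
    using assms unfolding bilin_op_def by auto
  show "m (x + y) z = m x z + m y z" "m x (y + z) = m x y + m x z" by (rule a1, rule a2)
  have z1: "\<And>z. m 0 z = 0" using a1[of 0 0] by (metis add_cancel_right_right add_0)
  have z2: "\<And>x. m x 0 = 0" using a2[of _ 0 0] by (metis add_cancel_right_right add_0)
  show "m 0 z = 0" "m x 0 = 0" by (rule z1, rule z2)
  have n1: "\<And>x z. m (- x) z = - m x z"
  proof -
    fix x z have "m (- x) z + m x z = 0" using a1[of "- x" x z] z1 by simp
    then show "m (- x) z = - m x z" by (simp add: eq_neg_iff_add_eq_0)
  qed
  have n2: "\<And>x z. m x (- z) = - m x z"
  proof -
    fix x z have "m x (- z) + m x z = 0" using a2[of x "- z" z] z2 by simp
    then show "m x (- z) = - m x z" by (simp add: eq_neg_iff_add_eq_0)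
  qed
  show "m (- x) z = - m x z" "m x (- z) = - m x z" by (rule n1, rule n2)
  show "m (x - y) z = m x z - m y z" "m x (y - z) = m x y - m x z"
    by (simp_all only: diff_conv_add_uminus a1 a2 n1 n2)
  show "m (sc c x) z = sc c (m x z)" "m x (sc c z) = sc c (m x z)"
    using assms unfolding bilin_op_def by auto
qed

lemma bilin_form_rules:
  assumes "bilin_form sc m"
  shows "m (x + y) z = m x z + m y z" "m x (y + z) = m x y + m x z"
    "m 0 z = 0" "m x 0 = 0" "m (- x) z = - m x z" "m x (- z) = - m x z"
    "m (x - y) z = m x z - m y z" "m x (y - z) = m x y - m x z"
    "m (sc c x) z = c * (m x z)" "m x (sc c z) = c * (m x z)"
proof -
  have a1: "\<And>x y z. m (x + y) z = m x z + m y z" and a2: "\<And>x y z. m x (y + z) = m x y + m x z"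
    using assms unfolding bilin_form_def by auto
  show "m (x + y) z = m x z + m y z" "m x (y + z) = m x y + m x z" by (rule a1, rule a2)
  have z1: "\<And>z. m 0 z = 0" using a1[of 0 0] by (metis add_cancel_right_right add_0)
  have z2: "\<And>x. m x 0 = 0" using a2[of _ 0 0] by (metis add_cancel_right_right add_0)
  show "m 0 z = 0" "m x 0 = 0" by (rule z1, rule z2)
  have n1: "\<And>x z. m (- x) z = - m x z"
  proof -
    fix x z have "m (- x) z + m x z = 0" using a1[of "- x" x z] z1 by simp
    then show "m (- x) z = - m x z" by (simp add: eq_neg_iff_add_eq_0)
  qed
  have n2: "\<And>x z. m x (- z) = - m x z"
  proof -
    fix x z have "m x (- z) + m x z = 0" using a2[of x "- z" z] z2 by simp
    then show "m x (- z) = - m x z" by (simp add: eq_neg_iff_add_eq_0)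
  qed
  show "m (- x) z = - m x z" "m x (- z) = - m x z" by (rule n1, rule n2)
  show "m (x - y) z = m x z - m y z" "m x (y - z) = m x y - m x z"
    by (simp_all only: diff_conv_add_uminus a1 a2 n1 n2)
  show "m (sc c x) z = c * (m x z)" "m x (sc c z) = c * (m x z)"
    using assms unfolding bilin_form_def by auto
qed



lemma dpair_rules:
  fixes a b u v :: "'n::finite \<Rightarrow> 'k::field"
  shows "dpair (a + b) u = dpair a u + dpair b u" "dpair a (u + v) = dpair a u + dpair a v"
    "dpair (- a) u = - dpair a u" "dpair a (- u) = - dpair a u"
    "dpair (a - b) u = dpair a u - dpair b u" "dpair a (u - v) = dpair a u - dpair a v"
    "dpair (vsc c a) u = c * dpair a u" "dpair a (vsc c u) = c * dpair a u"
    "dpair 0 u = 0" "dpair a 0 = 0"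
  unfolding dpair_def vsc_def
  by (simp_all add: sum.distrib sum_negf sum_subtractf sum_distrib_left algebra_simps)

definition delta :: "'n \<Rightarrow> 'n \<Rightarrow> 'k::field" where "delta i = (\<lambda>j. if j = i then 1 else 0)"

lemma dpair_delta: "dpair a (delta i) = a i"
  unfolding dpair_def delta_def by (simp add: if_distrib cong: if_cong)

lemma dpair_ext: "(\<And>u. dpair a u = dpair b u) \<Longrightarrow> a = b"
proof
  fix i assume "\<And>u. dpair a u = dpair b u"
  then have "dpair a (delta i) = dpair b (delta i)" by blast
  then show "a i = b i" by (simp add: dpair_delta)
qed

lemma lin_expand:
  fixes \<phi> :: "('n::finite \<Rightarrow> 'k::field) \<Rightarrow> 'k"
  assumes add: "\<And>u v. \<phi> (u + v) = \<phi> u + \<phi> v" and hom: "\<And>c u. \<phi> (vsc c u) = c * \<phi> u"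
  shows "\<phi> u = (\<Sum>i\<in>UNIV. u i * \<phi> (delta i))"
proof -
  have z: "\<phi> 0 = 0" using hom[of 0 0] by (simp add: vsc_def zero_fun_def)
  have "\<phi> (\<lambda>j. if j \<in> S then u j else 0) = (\<Sum>i\<in>S. u i * \<phi> (delta i))" if "finite S" for S
    using that
  proof (induction S rule: finite_induct)
    case empty
    then show ?case using z by (simp add: zero_fun_def)
  next
    case (insert i S)
    have eq: "(\<lambda>j. if j \<in> insert i S then u j else 0) = (\<lambda>j. if j \<in> S then u j else 0) + vsc (u i) (delta i)"
      using insert(2) unfolding fun_eq_iff vsc_def delta_def plus_fun_apply by auto
    have "\<phi> (\<lambda>j. if j \<in> insert i S then u j else 0) = \<phi> (\<lambda>j. if j \<in> S then u j else 0) + u i * \<phi> (delta i)"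
      unfolding eq add hom ..
    also have "\<dots> = (\<Sum>i\<in>insert i S. u i * \<phi> (delta i))"
      using insert(1,2,3) by (simp add: add.commute)
    finally show ?case .
  qed
  from this[of UNIV] show ?thesis by (simp cong: if_cong)
qed

lemma dual_rep_eq:
  fixes \<rho> :: "('n::finite \<Rightarrow> 'k::field) \<Rightarrow> ('n \<Rightarrow> 'k) \<Rightarrow> ('n \<Rightarrow> 'k)"
  assumes add: "\<And>u v. \<rho> x (u + v) = \<rho> x u + \<rho> x v" and hom: "\<And>c u. \<rho> x (vsc c u) = vsc c (\<rho> x u)"
  shows "dpair (dual_rep \<rho> x a) u = - dpair a (\<rho> x u)"
proof -
  define b where "b = (\<lambda>i. - dpair a (\<rho> x (delta i)))"
  have e: "\<And>u. dpair a (\<rho> x u) = (\<Sum>i\<in>UNIV. u i * dpair a (\<rho> x (delta i)))"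
  proof -
    fix u
    have p1: "\<And>u v. dpair a (\<rho> x (u + v)) = dpair a (\<rho> x u) + dpair a (\<rho> x v)"
      by (simp only: add dpair_rules)
    have p2: "\<And>c u. dpair a (\<rho> x (vsc c u)) = c * dpair a (\<rho> x u)"
      by (simp only: hom dpair_rules)
    show "dpair a (\<rho> x u) = (\<Sum>i\<in>UNIV. u i * dpair a (\<rho> x (delta i)))"
      by (rule lin_expand[where \<phi>="\<lambda>u. dpair a (\<rho> x u)", OF p1 p2])
  qed
  have hb: "\<forall>u. dpair b u = - dpair a (\<rho> x u)"
  proof
    fix u
    have "dpair b u = - (\<Sum>i\<in>UNIV. u i * dpair a (\<rho> x (delta i)))"
      by (simp add: b_def dpair_def sum_negf mult.commute)
    then show "dpair b u = - dpair a (\<rho> x u)" by (simp only: e[of u])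
  qed
  have "dual_rep \<rho> x a = b"
    unfolding dual_rep_def
  proof (rule the_equality)
    show "\<forall>u. dpair b u = - dpair a (\<rho> x u)" by (rule hb)
  next
    fix b' assume "\<forall>u. dpair b' u = - dpair a (\<rho> x u)"
    then show "b' = b" using hb by (intro dpair_ext) simp
  qed
  then show ?thesis using hb by simp
qed






locale P1 =
  fixes sc :: "'k::field_char_0 \<Rightarrow> 'v::ab_group_add \<Rightarrow> 'v"
    and m br circ :: "'v \<Rightarrow> 'v \<Rightarrow> 'v" and B :: "'v \<Rightarrow> 'v \<Rightarrow> 'k"
  assumes pa: "poisson_alg sc m br" and bf: "bilin_form sc B" and nd: "nondegenerate_form B"
    and sy: "symmetric_form B" and inv: "invariant_form m B" and coc: "comm_2cocycle br B"
    and cB: "\<And>x y z. B (circ x y) z = B y (br x z)"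
begin

lemma mbil: "bilin_op sc m" using pa unfolding poisson_alg_def comm_assoc_alg_def by auto
lemma brbil: "bilin_op sc br" using pa unfolding poisson_alg_def lie_alg_def by auto
lemmas mr = bilin_op_rules[OF mbil]
lemmas brr = bilin_op_rules[OF brbil]
lemmas Br = bilin_form_rules[OF bf]
lemma m_comm: "m x y = m y x" using pa unfolding poisson_alg_def comm_assoc_alg_def by auto
lemma m_assoc: "m (m x y) z = m x (m y z)" using pa unfolding poisson_alg_def comm_assoc_alg_def by auto
lemma br_alt: "br x x = 0" using pa unfolding poisson_alg_def lie_alg_def by auto
lemma jac: "br x (br y z) + br y (br z x) + br z (br x y) = 0"
  using pa unfolding poisson_alg_def lie_alg_def by auto
lemma leib: "br z (m x y) = m (br z x) y + m x (br z y)"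
  using pa unfolding poisson_alg_def by auto
lemma br_anti: "br y x = - br x y"
proof -
  have "br (x + y) (x + y) = 0" by (rule br_alt)
  then have "br x y + br y x = 0" by (simp only: brr(1,2) br_alt[of x] br_alt[of y] add_0_left add_0_right) (simp add: add.commute)
  then show ?thesis by (simp add: eq_neg_iff_add_eq_0 add.commute)
qed
lemma Bsym: "B x y = B y x" using sy unfolding symmetric_form_def by auto
lemma Binv: "B (m x y) z = B x (m y z)" using inv unfolding invariant_form_def by auto
lemma cocy: "B (br x y) z + B (br y z) x + B (br z x) y = 0"
  using coc unfolding comm_2cocycle_def by auto
lemma ndg0: "(\<And>w. B p w = 0) \<Longrightarrow> p = 0" using nd unfolding nondegenerate_form_def by auto
lemma ndg: "(\<And>w. B p w = B q w) \<Longrightarrow> p = q"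
proof -
  assume h: "\<And>w. B p w = B q w"
  have "p - q = 0" by (rule ndg0) (simp add: Br h)
  then show ?thesis by simp
qed

lemma Bm: "B (m a b) c = B b (m a c)"
  by (simp add: Binv[symmetric] m_comm)

lemma circ_comm: "circ x y - circ y x = br x y"
proof (rule ndg)
  fix w
  have c: "B (br x y) w + B (br y w) x + B (br w x) y = 0" by (rule cocy)
  have "B (circ x y - circ y x) w = B y (br x w) - B x (br y w)" by (simp add: Br cB)
  also have "\<dots> = B (br x y) w" using c
    by (simp add: Bsym[of x] Bsym[of y] br_anti[of w x] Br eq_neg_iff_add_eq_0 algebra_simps)
  finally show "B (circ x y - circ y x) w = B (br x y) w" .
qed


lemma circ_bil: "bilin_op sc circ"
  unfolding bilin_op_def
  by (intro conjI allI; rule ndg; simp add: cB Br brr)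

lemmas cr = bilin_op_rules[OF circ_bil]

lemma Pa: "B u (m (br a b) v) = B (br a b) (m v u)"
  by (metis Bsym Binv)
lemma Pb: "B u (m v (br a b)) = B (br a b) (m v u)"
  by (metis Bsym Binv m_comm)

lemma A1: "circ (m x y) z = m x (circ y z) + m y (circ x z)"
proof (rule ndg)
  fix w
  have 1: "B (circ (m x y) z) w = - B z (m (br w x) y) - B z (m x (br w y))"
    by (simp add: cB br_anti[where y="m x y" and x=w] leib Br brr)
  have 2: "B (m x (circ y z)) w = B z (m (br y x) w) + B z (m x (br y w))"
    by (simp add: Bm cB leib Br)
  have 3: "B (m y (circ x z)) w = B z (m (br x y) w) + B z (m y (br x w))"
    by (simp add: Bm cB leib Br)
  have e1: "B z (m (br w x) y) = - B z (m y (br x w))"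
    by (simp add: br_anti[where x=x and y=w] mr Br m_comm[of "br x w" y])
  have e2: "B z (m x (br w y)) = - B z (m x (br y w))"
    by (simp add: br_anti[where x=y and y=w] mr Br)
  have e3: "B z (m (br y x) w) = - B z (m (br x y) w)"
    by (simp add: br_anti[where x=x and y=y] mr Br)
  show "B (circ (m x y) z) w = B (m x (circ y z) + m y (circ x z)) w"
    by (simp add: 1 2 3 e1 e2 e3 Br)
qed

lemma A2: "m (circ x y - circ y x) z = m y (circ x z) - circ x (m y z)"
proof (rule ndg)
  fix w
  have l: "B (m (br x y) z) w = B z (m (br x y) w)" by (rule Bm)
  have r1: "B (m y (circ x z)) w = B z (m (br x y) w) + B z (m y (br x w))"
    by (simp add: Bm cB leib Br)
  have r2: "B (circ x (m y z)) w = B z (m y (br x w))" by (simp add: cB Bm)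
  show "B (m (circ x y - circ y x) z) w = B (m y (circ x z) - circ x (m y z)) w"
    by (simp add: circ_comm l r1 r2 Br)
qed

lemma A3: "circ z (m x y) + m z (circ x y) + m z (circ y x) - circ (m x y) z - circ (m x y) z = 0"
proof (rule ndg0)
  fix w
  have c: "B (br z w) (m x y) + B (br w (m x y)) z + B (br (m x y) z) w = 0" by (rule cocy)
  have 1: "B (circ z (m x y)) w = B (br z w) (m x y)" by (simp only: cB Bsym[of "m x y"])
  have 2: "B (m z (circ x y)) w = B y (m (br x z) w) + B y (m z (br x w))"
    by (simp add: Bm cB leib Br)
  have 3: "B (m z (circ y x)) w = B x (m (br y z) w) + B x (m z (br y w))"
    by (simp add: Bm cB leib Br)
  have 4: "B (circ (m x y) z) w = - B z (m (br w x) y) - B z (m x (br w y))"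
    by (simp add: cB br_anti[where y="m x y" and x=w] leib Br brr)
  have c': "B (br z w) (m x y) + B z (m (br w x) y) + B z (m x (br w y)) - B w (m (br z x) y) - B w (m x (br z y)) = 0"
    using c by (simp add: leib Br br_anti[where y="m x y" and x=z] brr Bsym[of _ z] Bsym[of _ w] algebra_simps)
  show "B (circ z (m x y) + m z (circ x y) + m z (circ y x) - circ (m x y) z - circ (m x y) z) w = 0"
    using c' by (simp add: Br 1 2 3 4 Pa Pb br_anti[where x=x and y=y] br_anti[where x=x and y=z]
       br_anti[where x=x and y=w] br_anti[where x=y and y=z] br_anti[where x=y and y=w] br_anti[where x=z and y=w]
       brr mr m_comm algebra_simps)
qed

lemma jac2: "br y (br x w) - br x (br y w) = br (br y x) w"
proof -
  have "br y (br x w) + br x (br w y) + br w (br y x) = 0" by (rule jac)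
  then show ?thesis
    by (simp add: br_anti[where x=y and y=w] br_anti[where x="br y x" and y=w] brr algebra_simps)
qed

lemma A4: "circ x (circ y z) - circ y (circ x z) = circ (circ y x - circ x y) z"
proof (rule ndg)
  fix w
  have "B z (br y (br x w)) - B z (br x (br y w)) = B z (br (br y x) w)"
    using jac2[of y x w] by (metis Br(8))
  then show "B (circ x (circ y z) - circ y (circ x z)) w = B (circ (circ y x - circ x y) z) w"
    by (simp add: circ_comm cB Br)
qed

lemma JQ: "B (br (br a b) c) d + B (br (br b c) a) d + B (br (br c a) b) d = 0"
proof -
  have "br c (br a b) + br a (br b c) + br b (br c a) = 0" by (rule jac)
  then have "br (br a b) c + br (br b c) a + br (br c a) b = 0"
    by (simp add: br_anti[where y=c and x="br a b"] br_anti[where y=a and x="br b c"]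
        br_anti[where y=b and x="br c a"] algebra_simps)
      (metis add.commute add.left_commute add_eq_0_iff2 minus_add_distrib neg_0_equal_iff_equal)
  then have "B (br (br a b) c + br (br b c) a + br (br c a) b) d = 0" by (simp add: Br)
  then show ?thesis by (simp add: Br)
qed

lemma CQ: "B (br (br a b) c) d + B (br c d) (br a b) - B (br (br a b) d) c = 0"
  using cocy[of "br a b" c d] by (simp add: br_anti[where y=d and x="br a b"] Br)

lemma A5: "circ (circ x y - circ y x) z + circ (circ y z - circ z y) x + circ (circ z x - circ x z) y = 0"
proof (rule ndg0)
  fix w
  have k: "2 * (B (br (br x y) w) z + B (br (br y z) w) x + B (br (br z x) w) y) = (B (br (br x y) z) w + B (br (br y z) x) w + B (br (br z x) y) w) - (B (br (br x y) z) w + B (br z w) (br x y) - B (br (br x y) w) z) + (B (br (br x y) w) z + B (br (br y w) x) z + B (br (br w x) y) z) + (B (br (br x z) y) w + B (br y w) (br x z) - B (br (br x z) w) y) - (B (br (br x z) w) y + B (br (br z w) x) y + B (br (br w x) z) y) + (B (br (br x w) y) z + B (br y z) (br x w) - B (br (br x w) z) y) - (B (br (br y z) x) w + B (br x w) (br y z) - B (br (br y z) w) x) + (B (br (br y z) w) x + B (br (br z w) y) x + B (br (br w y) z) x) - (B (br (br y w) x) z + B (br x z) (br y w) - B (br (br y w) z) x) + (B (br (br z w) x) y + B (br x y) (br z w) - B (br (br z w) y) x)"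
    by (simp add: br_anti[where x=x and y=y] br_anti[where x=x and y=z]
       br_anti[where x=x and y=w] br_anti[where x=y and y=z] br_anti[where x=y and y=w] br_anti[where x=z and y=w]
       brr Br Bsym algebra_simps)
  have k2: "(B (br (br x y) z) w + B (br (br y z) x) w + B (br (br z x) y) w) - (B (br (br x y) z) w + B (br z w) (br x y) - B (br (br x y) w) z) + (B (br (br x y) w) z + B (br (br y w) x) z + B (br (br w x) y) z) + (B (br (br x z) y) w + B (br y w) (br x z) - B (br (br x z) w) y) - (B (br (br x z) w) y + B (br (br z w) x) y + B (br (br w x) z) y) + (B (br (br x w) y) z + B (br y z) (br x w) - B (br (br x w) z) y) - (B (br (br y z) x) w + B (br x w) (br y z) - B (br (br y z) w) x) + (B (br (br y z) w) x + B (br (br z w) y) x + B (br (br w y) z) x) - (B (br (br y w) x) z + B (br x z) (br y w) - B (br (br y w) z) x) + (B (br (br z w) x) y + B (br x y) (br z w) - B (br (br z w) y) x) = 0" by (simp only: JQ[of x y z w] CQ[of x y z w] JQ[of x y w z] CQ[of x z y w] JQ[of x z w y] CQ[of x w y z] CQ[of y z x w] JQ[of y z w x] CQ[of y w x z] CQ[of z w x y]) simp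
  have "2 * (B (br (br x y) w) z + B (br (br y z) w) x + B (br (br z x) w) y) = 0"
    using k by (simp only: k2)
  then have "B (br (br x y) w) z + B (br (br y z) w) x + B (br (br z x) w) y = 0"
    by (metis mult_eq_0_iff zero_neq_numeral)
  then show "B (circ (circ x y - circ y x) z + circ (circ y z - circ z y) x + circ (circ z x - circ x z) y) w = 0"
    by (simp add: circ_comm cB Br Bsym[of z] Bsym[of x] Bsym[of y])
qed


lemma part1: "PCA_alg sc m circ \<and> (\<forall>x y. circ x y - circ y x = br x y)"
  unfolding PCA_alg_def comm_assoc_alg_def anti_pre_lie_alg_def
  using mbil m_comm m_assoc circ_bil A1 A2 A3 A4 A5 circ_comm by blast

end

lemma vsc_rules:
  "vsc c (a + b) = vsc c a + vsc c b" "vsc c (a - b) = vsc c a - vsc c b" "vsc c (- a) = - vsc c a"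
  by (simp_all add: vsc_def fun_eq_iff algebra_simps)

locale P2 =
  fixes m circ :: "('n::finite \<Rightarrow> 'k::field_char_0) \<Rightarrow> ('n \<Rightarrow> 'k) \<Rightarrow> ('n \<Rightarrow> 'k)"
  assumes pca: "PCA_alg vsc m circ"
begin

definition br where "br x y = circ x y - circ y x"
definition mu where "mu x a = - dual_rep m x a"
definition rho where "rho x a = - dual_rep circ x a"

lemma mbil: "bilin_op vsc m" using pca unfolding PCA_alg_def comm_assoc_alg_def by auto
lemma cbil: "bilin_op vsc circ" using pca unfolding PCA_alg_def anti_pre_lie_alg_def by auto
lemmas mr = bilin_op_rules[OF mbil]
lemmas cr = bilin_op_rules[OF cbil]
lemma m_comm: "m x y = m y x" using pca unfolding PCA_alg_def comm_assoc_alg_def by auto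
lemma m_assoc: "m (m x y) z = m x (m y z)" using pca unfolding PCA_alg_def comm_assoc_alg_def by auto
lemma m_lcomm: "m x (m y z) = m y (m x z)" by (metis m_assoc m_comm)
lemma apl1: "circ x (circ y z) - circ y (circ x z) = circ (circ y x - circ x y) z"
  using pca unfolding PCA_alg_def anti_pre_lie_alg_def by auto
lemma apl2: "circ (circ x y - circ y x) z + circ (circ y z - circ z y) x + circ (circ z x - circ x z) y = 0"
  using pca unfolding PCA_alg_def anti_pre_lie_alg_def by auto
lemma ax1: "circ (m x y) z = m x (circ y z) + m y (circ x z)"
  using pca unfolding PCA_alg_def by auto
lemma ax2: "m (circ x y - circ y x) z = m y (circ x z) - circ x (m y z)"
  using pca unfolding PCA_alg_def by auto
lemma ax3: "circ z (m x y) + m z (circ x y) + m z (circ y x) - circ (m x y) z - circ (m x y) z = 0"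
  using pca unfolding PCA_alg_def by blast

lemma circ_m: "circ (m x y) u = circ x (m y u) + circ y (m x u)"
proof -
  have h1: "circ (m x y) u - (m x (circ y u) + m y (circ x u)) = 0" using ax1 by simp
  have h2: "m (circ x y - circ y x) u - (m y (circ x u) - circ x (m y u)) = 0" using ax2 by simp
  have h3: "m (circ y x - circ x y) u - (m x (circ y u) - circ y (m x u)) = 0" using ax2 by simp
  have "circ (m x y) u - (circ x (m y u) + circ y (m x u)) =
     (circ (m x y) u - (m x (circ y u) + m y (circ x u)))
   - (m (circ x y - circ y x) u - (m y (circ x u) - circ x (m y u)))
   - (m (circ y x - circ x y) u - (m x (circ y u) - circ y (m x u)))"
    by (simp add: mr algebra_simps)
  then have "circ (m x y) u - (circ x (m y u) + circ y (m x u)) = 0" by (simp only: h1 h2 h3) simp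
  then show ?thesis by simp
qed

lemma m_circ: "m y (circ z u) = m (br z y) u + circ z (m y u)"
  using ax2[of z y u] by (simp add: br_def algebra_simps)

lemma brL: "br z (m x y) = m (br z x) y + m x (br z y)"
proof -
  have h3: "circ z (m x y) + m z (circ x y) + m z (circ y x) - circ (m x y) z - circ (m x y) z = 0" by (rule ax3)
  have h1: "circ (m x y) z - (m x (circ y z) + m y (circ x z)) = 0" using ax1 by simp
  have ha: "m (circ x y - circ y x) z - (m y (circ x z) - circ x (m y z)) = 0" using ax2 by simp
  have hb: "m (circ x z - circ z x) y - (m z (circ x y) - circ x (m z y)) = 0" using ax2 by simp
  have ha': "m (circ y x - circ x y) z - (m x (circ y z) - circ y (m x z)) = 0" using ax2 by simp
  have hb': "m (circ y z - circ z y) x - (m z (circ y x) - circ y (m z x)) = 0" using ax2 by simp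
  have "circ z (m x y) - circ (m x y) z - (m (circ z x - circ x z) y + m x (circ z y - circ y z)) =
      (circ z (m x y) + m z (circ x y) + m z (circ y x) - circ (m x y) z - circ (m x y) z)
    + (circ (m x y) z - (m x (circ y z) + m y (circ x z)))
    + (m (circ x z - circ z x) y - (m z (circ x y) - circ x (m z y)))
    - (m (circ x y - circ y x) z - (m y (circ x z) - circ x (m y z)))
    + (m (circ y z - circ z y) x - (m z (circ y x) - circ y (m z x)))
    - (m (circ y x - circ x y) z - (m x (circ y z) - circ y (m x z)))"
    by (simp add: mr m_comm algebra_simps)
  then have "circ z (m x y) - circ (m x y) z - (m (circ z x - circ x z) y + m x (circ z y - circ y z)) = 0"
    by (simp only: h1 h3 ha hb ha' hb') simp
  then show ?thesis by (simp add: br_def)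
qed

lemma brJ: "br x (br y z) + br y (br z x) + br z (br x y) = 0"
proof -
  have a1: "circ x (circ y z) - circ y (circ x z) - circ (circ y x - circ x y) z = 0" using apl1 by simp
  have a2: "circ y (circ z x) - circ z (circ y x) - circ (circ z y - circ y z) x = 0" using apl1 by simp
  have a3: "circ z (circ x y) - circ x (circ z y) - circ (circ x z - circ z x) y = 0" using apl1 by simp
  have p: "circ (circ x y - circ y x) z + circ (circ y z - circ z y) x + circ (circ z x - circ x z) y = 0"
    by (rule apl2)
  have "br x (br y z) + br y (br z x) + br z (br x y) =
     (circ x (circ y z) - circ y (circ x z) - circ (circ y x - circ x y) z)
   + (circ y (circ z x) - circ z (circ y x) - circ (circ z y - circ y z) x)
   + (circ z (circ x y) - circ x (circ z y) - circ (circ x z - circ z x) y)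
   - (circ (circ x y - circ y x) z + circ (circ y z - circ z y) x + circ (circ z x - circ x z) y)
   - (circ (circ x y - circ y x) z + circ (circ y z - circ z y) x + circ (circ z x - circ x z) y)"
    by (simp add: br_def cr algebra_simps)
  then show ?thesis by (simp only: a1 a2 a3 p) simp
qed

lemma brJ': "br x (br y z) + (br y (br z x) + br z (br x y)) = 0"
  using brJ by (simp add: add.assoc)

lemma dmu: "dpair (mu x a) u = dpair a (m x u)"
proof -
  have "dpair (dual_rep m x a) u = - dpair a (m x u)" by (rule dual_rep_eq) (simp_all add: mr)
  then show ?thesis by (simp add: mu_def dpair_rules)
qed
lemma drho: "dpair (rho x a) u = dpair a (circ x u)"
proof -
  have "dpair (dual_rep circ x a) u = - dpair a (circ x u)" by (rule dual_rep_eq) (simp_all add: cr)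
  then show ?thesis by (simp add: rho_def dpair_rules)
qed

lemma mu_lin:
  "mu (x + y) a = mu x a + mu y a" "mu x (a + b) = mu x a + mu x b"
  "mu (x - y) a = mu x a - mu y a" "mu x (a - b) = mu x a - mu x b"
  "mu (- x) a = - mu x a" "mu x (- a) = - mu x a"
  "mu (vsc c x) a = vsc c (mu x a)" "mu x (vsc c a) = vsc c (mu x a)"
  by (rule dpair_ext; simp add: dmu dpair_rules mr algebra_simps)+
lemma rho_lin:
  "rho (x + y) a = rho x a + rho y a" "rho x (a + b) = rho x a + rho x b"
  "rho (x - y) a = rho x a - rho y a" "rho x (a - b) = rho x a - rho x b"
  "rho (- x) a = - rho x a" "rho x (- a) = - rho x a"
  "rho (vsc c x) a = vsc c (rho x a)" "rho x (vsc c a) = vsc c (rho x a)"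
  by (rule dpair_ext; simp add: drho dpair_rules cr algebra_simps)+

lemma br_lin:
  "br (x + y) z = br x z + br y z" "br x (y + z) = br x y + br x z"
  "br (vsc c x) z = vsc c (br x z)" "br x (vsc c z) = vsc c (br x z)"
  "br x x = 0"
  by (simp_all add: br_def cr vsc_rules algebra_simps)

lemma mu_rep: "mu x (mu y c) = mu (m x y) c"
  by (rule dpair_ext) (simp add: dmu m_assoc m_comm m_lcomm)

lemma rho_rep: "rho x (rho y c) = rho (br x y) c + rho y (rho x c)"
proof (rule dpair_ext)
  fix u
  have "dpair c (circ y (circ x u)) = dpair c (circ (br x y) u + circ x (circ y u))"
    using apl1[of y x u] by (simp add: br_def algebra_simps)
  then show "dpair (rho x (rho y c)) u = dpair (rho (br x y) c + rho y (rho x c)) u"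
    by (simp add: drho dpair_rules)
qed

lemma L1: "rho z (mu y a) = mu (br z y) a + mu y (rho z a)"
  by (rule dpair_ext) (simp add: drho dmu m_circ dpair_rules)
lemma L2: "rho (m x y) c = mu y (rho x c) + mu x (rho y c)"
  by (rule dpair_ext) (simp add: drho dmu circ_m dpair_rules)

lemma SMp: "sd_mult m mu (x,a) (y,b) = (m x y, mu x b + mu y a)" by (simp add: sd_mult_def)
lemma SBp: "sd_bracket br rho (x,a) (y,b) = (br x y, rho x b - rho y a)" by (simp add: sd_bracket_def)
lemma pscp: "psc c (x,a) = (vsc c x, vsc c a)" by (simp add: psc_def)
lemma Bdp: "B_d (x,a) (y,b) = dpair b x + dpair a y" by (simp add: B_d_def)

lemma part2: "poisson_alg psc (sd_mult m mu) (sd_bracket br rho) \<and>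
          invariant_form (sd_mult m mu) B_d \<and> comm_2cocycle (sd_bracket br rho) B_d"
  unfolding poisson_alg_def comm_assoc_alg_def lie_alg_def bilin_op_def invariant_form_def
    comm_2cocycle_def symmetric_form_def split_paired_All
  apply (intro conjI allI)
  apply (simp_all add: SMp SBp pscp Bdp mr mu_lin rho_lin br_lin vsc_rules mu_rep L1 L2 dpair_rules dmu drho
     m_comm brJ brL prod_eq_iff algebra_simps)
    apply (simp add: m_assoc m_comm m_lcomm)
   subgoal for x a y b z c
     apply (rule conjI)
      apply (rule brJ')
     by (simp add: rho_rep[of x y c] rho_rep[of y z a] rho_rep[of z x b] algebra_simps)
  apply (simp add: br_def dpair_rules algebra_simps)
  done


lemma part2': "let br = (\<lambda>x y. circ x y - circ y x);
           mu = (\<lambda>x a. - dual_rep m x a);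
           rho = (\<lambda>x a. - dual_rep circ x a)
       in poisson_alg psc (sd_mult m mu) (sd_bracket br rho) \<and>
          invariant_form (sd_mult m mu) B_d \<and>
          comm_2cocycle (sd_bracket br rho) B_d"
proof -
  have e1: "(\<lambda>x y. circ x y - circ y x) = br" by (simp add: br_def fun_eq_iff)
  have e2: "(\<lambda>x a. - dual_rep m x a) = mu" by (simp add: mu_def fun_eq_iff)
  have e3: "(\<lambda>x a. - dual_rep circ x a) = rho" by (simp add: rho_def fun_eq_iff)
  show ?thesis unfolding Let_def e1 e2 e3 by (rule part2)
qed

end

theorem mainTheorem3:
  shows
  "(\<forall>(m :: ('n::finite \<Rightarrow> 'k::field_char_0) \<Rightarrow> ('n \<Rightarrow> 'k) \<Rightarrow> ('n \<Rightarrow> 'k)) br B circ.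
      poisson_alg vsc m br \<and> bilin_form vsc B \<and> nondegenerate_form B \<and> symmetric_form B \<and>
      invariant_form m B \<and> comm_2cocycle br B \<and>
      (\<forall>x y z. B (circ x y) z = B y (br x z))
      \<longrightarrow> PCA_alg vsc m circ \<and> (\<forall>x y. circ x y - circ y x = br x y))
   \<and>
   (\<forall>(m :: ('n \<Rightarrow> 'k) \<Rightarrow> ('n \<Rightarrow> 'k) \<Rightarrow> ('n \<Rightarrow> 'k)) circ.
      PCA_alg vsc m circ \<longrightarrow>
      (let br = (\<lambda>x y. circ x y - circ y x);
           mu = (\<lambda>x a. - dual_rep m x a);
           rho = (\<lambda>x a. - dual_rep circ x a)
       in poisson_alg psc (sd_mult m mu) (sd_bracket br rho) \<and>
          invariant_form (sd_mult m mu) B_d \<and>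
          comm_2cocycle (sd_bracket br rho) B_d))"
proof (rule conjI; intro allI impI)
  fix m br circ :: "('n::finite \<Rightarrow> 'k::field_char_0) \<Rightarrow> ('n \<Rightarrow> 'k) \<Rightarrow> ('n \<Rightarrow> 'k)"
    and B :: "('n \<Rightarrow> 'k) \<Rightarrow> ('n \<Rightarrow> 'k) \<Rightarrow> 'k"
  assume H: "poisson_alg vsc m br \<and> bilin_form vsc B \<and> nondegenerate_form B \<and> symmetric_form B \<and>
      invariant_form m B \<and> comm_2cocycle br B \<and> (\<forall>x y z. B (circ x y) z = B y (br x z))"
  have "P1 vsc m br circ B" using H unfolding P1_def by blast
  then show "PCA_alg vsc m circ \<and> (\<forall>x y. circ x y - circ y x = br x y)" by (rule P1.part1)
next
  fix m circ :: "('n \<Rightarrow> 'k) \<Rightarrow> ('n \<Rightarrow> 'k) \<Rightarrow> ('n \<Rightarrow> 'k)"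
  assume "PCA_alg vsc m circ"
  then have "P2 m circ" unfolding P2_def .
  then show "let br = (\<lambda>x y. circ x y - circ y x);
           mu = (\<lambda>x a. - dual_rep m x a);
           rho = (\<lambda>x a. - dual_rep circ x a)
       in poisson_alg psc (sd_mult m mu) (sd_bracket br rho) \<and>
          invariant_form (sd_mult m mu) B_d \<and>
          comm_2cocycle (sd_bracket br rho) B_d" by (rule P2.part2')
qed

end
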